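(* Let $\Lambda$ be a row-finite $k$-graph with no sources and let $\alpha$ be an action of $\mathbb{Z}^l$ on $\Lambda$ by automorphisms. Then there is a unique homeomorphism $x\mapsto(x,\infty)$ from $\Lambda^\infty$ onto $(\Lambda\times_\alpha\mathbb{Z}^l)^\infty$ such that $(x,\infty)((0,0),(p,0))=(x(0,p),0)$ for all $p\in\mathbb{N}^k$.
   Context: A $k$-graph is a countable category $\Lambda$ with a functor $d:\Lambda\to\mathbb{N}^k$ with the unique factorisation property; vertices are degree-$0$ morphisms; row-finite means each $v\Lambda^n$ is finite, no sources means each $v\Lambda^n$ is nonempty. An automorphism is a bijective degree-preserving functor. $\Lambda\times_\alpha\mathbb{Z}^l$ is the $(k+l)$-graph with morphisms $\Lambda\times\mathbb{N}^l$, degree $(d(\lambda),m)\in\mathbb{N}^k\times\mathbb{N}^l$, $r(\lambda,m)=(r(\lambda),0)$, $s(\lambda,m)=(\alpha_{-m}(s(\lambda)),0)$, $(\mu,m)(\nu,n)=(\mu\alpha_m(\nu),m+n)$. For a $j$-graph $\Gamma$, $\Gamma^\infty$ is the set of degree-preserving functors $x:\Omega_j\to\Gamma$, where $\Omega_j=\{(a,b)\in\mathbb{N}^j\times\mathbb{N}^j:a\le b\}$ with $r(a,b)=(a,a)$, $s(a,b)=(b,b)$, $(a,b)(b,c)=(a,c)$, $d(a,b)=b-a$. $\Gamma^\infty$ has the topology with basis the cylinder sets $\lambda\Gamma^\infty=\{x\in\Gamma^\infty:x(0,d(\lambda))=\lambda\}$, $\lambda\in\Gamma$. *)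

theory Defs
  imports "HOL-Analysis.Analysis" "HOL-Library.Function_Algebras"
begin

text \<open>A k-graph: a countable category (objects identified with identity morphisms)
  with a degree functor into the monoid 'k => nat (= N^k, 'k finite index type).\<close>

record ('a, 'k) kg =
  Mor :: "'a set"
  rng :: "'a \<Rightarrow> 'a"
  src :: "'a \<Rightarrow> 'a"
  cmp :: "'a \<Rightarrow> 'a \<Rightarrow> 'a"
  deg :: "'a \<Rightarrow> 'k \<Rightarrow> nat"

definition is_category :: "('a, 'k) kg \<Rightarrow> bool" where
  "is_category G \<longleftrightarrow>
     (\<forall>u\<in>Mor G. rng G u \<in> Mor G \<and> src G u \<in> Mor G
        \<and> rng G (rng G u) = rng G u \<and> src G (rng G u) = rng G u
        \<and> rng G (src G u) = src G u \<and> src G (src G u) = src G u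
        \<and> cmp G (rng G u) u = u \<and> cmp G u (src G u) = u)
   \<and> (\<forall>u\<in>Mor G. \<forall>v\<in>Mor G. src G u = rng G v \<longrightarrow>
        cmp G u v \<in> Mor G \<and> rng G (cmp G u v) = rng G u \<and> src G (cmp G u v) = src G v)
   \<and> (\<forall>u\<in>Mor G. \<forall>v\<in>Mor G. \<forall>w\<in>Mor G. src G u = rng G v \<and> src G v = rng G w \<longrightarrow>
        cmp G (cmp G u v) w = cmp G u (cmp G v w))"

definition is_kgraph :: "('a, 'k::finite) kg \<Rightarrow> bool" where
  "is_kgraph G \<longleftrightarrow> is_category G \<and> countable (Mor G)
   \<and> (\<forall>u\<in>Mor G. \<forall>v\<in>Mor G. src G u = rng G v \<longrightarrow> deg G (cmp G u v) = deg G u + deg G v)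
   \<and> (\<forall>u\<in>Mor G. \<forall>m n. deg G u = m + n \<longrightarrow>
        (\<exists>!(p, q). p \<in> Mor G \<and> q \<in> Mor G \<and> src G p = rng G q
           \<and> deg G p = m \<and> deg G q = n \<and> cmp G p q = u))"

definition vertices :: "('a, 'k) kg \<Rightarrow> 'a set" where
  "vertices G = {v \<in> Mor G. deg G v = 0}"

definition row_finite :: "('a, 'k) kg \<Rightarrow> bool" where
  "row_finite G \<longleftrightarrow> (\<forall>v\<in>vertices G. \<forall>n. finite {u \<in> Mor G. rng G u = v \<and> deg G u = n})"

definition no_sources :: "('a, 'k) kg \<Rightarrow> bool" where
  "no_sources G \<longleftrightarrow> (\<forall>v\<in>vertices G. \<forall>n. {u \<in> Mor G. rng G u = v \<and> deg G u = n} \<noteq> {})"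

definition is_automorphism :: "('a, 'k) kg \<Rightarrow> ('a \<Rightarrow> 'a) \<Rightarrow> bool" where
  "is_automorphism G f \<longleftrightarrow> bij_betw f (Mor G) (Mor G)
   \<and> (\<forall>u\<in>Mor G. deg G (f u) = deg G u \<and> rng G (f u) = f (rng G u) \<and> src G (f u) = f (src G u))
   \<and> (\<forall>u\<in>Mor G. \<forall>v\<in>Mor G. src G u = rng G v \<longrightarrow> f (cmp G u v) = cmp G (f u) (f v))"

definition is_action :: "('a, 'k) kg \<Rightarrow> (('l \<Rightarrow> int) \<Rightarrow> 'a \<Rightarrow> 'a) \<Rightarrow> bool" where
  "is_action G \<alpha> \<longleftrightarrow> (\<forall>m. is_automorphism G (\<alpha> m))
   \<and> (\<forall>u\<in>Mor G. \<alpha> 0 u = u)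
   \<and> (\<forall>m n. \<forall>u\<in>Mor G. \<alpha> (m + n) u = \<alpha> m (\<alpha> n u))"

text \<open>The crossed product (k+l)-graph \<Lambda> \<times>_\<alpha> Z^l; N^(k+l) is ('k + 'l) => nat.\<close>
definition cross_product :: "('a, 'k) kg \<Rightarrow> (('l \<Rightarrow> int) \<Rightarrow> 'a \<Rightarrow> 'a)
    \<Rightarrow> ('a \<times> ('l \<Rightarrow> nat), 'k + 'l) kg" where
  "cross_product G \<alpha> =
    \<lparr> Mor = Mor G \<times> UNIV,
      rng = (\<lambda>(u, m). (rng G u, 0)),
      src = (\<lambda>(u, m). (\<alpha> (- (int \<circ> m)) (src G u), 0)),
      cmp = (\<lambda>(u, m) (v, n). (cmp G u (\<alpha> (int \<circ> m) v), m + n)),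
      deg = (\<lambda>(u, m) i. case i of Inl a \<Rightarrow> deg G u a | Inr b \<Rightarrow> m b) \<rparr>"

text \<open>Infinite paths: degree-preserving functors \<Omega>_j -> G, where \<Omega>_j has morphisms
  the pairs (a,b) with a \<le> b; such functors are represented as functions on pairs,
  fixed to be undefined outside \<Omega>_j.\<close>
definition inf_paths :: "('a, 'j) kg \<Rightarrow> ((('j \<Rightarrow> nat) \<times> ('j \<Rightarrow> nat)) \<Rightarrow> 'a) set" where
  "inf_paths G = {x.
     (\<forall>a b. a \<le> b \<longrightarrow> x (a, b) \<in> Mor G \<and> deg G (x (a, b)) = b - a
            \<and> rng G (x (a, b)) = x (a, a) \<and> src G (x (a, b)) = x (b, b))
   \<and> (\<forall>a b c. a \<le> b \<and> b \<le> c \<longrightarrow> x (a, c) = cmp G (x (a, b)) (x (b, c)))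
   \<and> (\<forall>a b. \<not> a \<le> b \<longrightarrow> x (a, b) = undefined)}"

definition cylinder :: "('a, 'j) kg \<Rightarrow> 'a \<Rightarrow> ((('j \<Rightarrow> nat) \<times> ('j \<Rightarrow> nat)) \<Rightarrow> 'a) set" where
  "cylinder G u = {x \<in> inf_paths G. x (0, deg G u) = u}"

definition path_topology :: "('a, 'j) kg \<Rightarrow> ((('j \<Rightarrow> nat) \<times> ('j \<Rightarrow> nat)) \<Rightarrow> 'a) topology" where
  "path_topology G = topology_generated_by {cylinder G u | u. u \<in> Mor G}"

definition embed_deg :: "('k \<Rightarrow> nat) \<Rightarrow> ('k + 'l \<Rightarrow> nat)" where
  "embed_deg p = (\<lambda>i. case i of Inl a \<Rightarrow> p a | Inr _ \<Rightarrow> 0)"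

end

theory Submission
  imports Defs
begin

definition cs :: "('k \<Rightarrow> nat) \<Rightarrow> ('l \<Rightarrow> nat) \<Rightarrow> ('k + 'l \<Rightarrow> nat)" where
  "cs p m = (\<lambda>i. case i of Inl a \<Rightarrow> p a | Inr b \<Rightarrow> m b)"

lemma cs_Inl[simp]: "cs p m \<circ> Inl = p" and cs_Inr[simp]: "cs p m \<circ> Inr = m"
  by (auto simp: cs_def fun_eq_iff)

lemma cs_split: "a = cs (a \<circ> Inl) (a \<circ> Inr)"
  by (auto simp: cs_def fun_eq_iff split: sum.splits)

lemma cs_le[simp]: "cs p m \<le> cs q n \<longleftrightarrow> p \<le> q \<and> m \<le> n"
  by (auto simp: cs_def le_fun_def split: sum.splits)

lemma cs_zero[simp]: "cs 0 0 = 0" by (auto simp: cs_def fun_eq_iff split: sum.splits)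
lemma embed_cs: "embed_deg p = cs p 0" by (auto simp: cs_def embed_deg_def fun_eq_iff split: sum.splits)
lemma cs_minus[simp]: "cs q n - cs p m = cs (q - p) (n - m)"
  by (auto simp: cs_def fun_eq_iff split: sum.splits)
lemma cs_inj[simp]: "cs p m = cs q n \<longleftrightarrow> p = q \<and> m = n"
  by (metis cs_Inl cs_Inr)

lemma zero_comp[simp]: "(0::'k+'l\<Rightarrow>nat) \<circ> Inl = 0" "(0::'k+'l\<Rightarrow>nat) \<circ> Inr = 0"
  by (auto simp: fun_eq_iff)

lemma le_Inl: "a \<le> b \<Longrightarrow> a \<circ> Inl \<le> b \<circ> Inl" by (simp add: le_fun_def)
lemma le_Inr: "a \<le> b \<Longrightarrow> a \<circ> Inr \<le> b \<circ> Inr" by (simp add: le_fun_def)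

lemma cross_simps[simp]:
  "Mor (cross_product G \<alpha>) = Mor G \<times> UNIV"
  "rng (cross_product G \<alpha>) (u, m) = (rng G u, 0)"
  "src (cross_product G \<alpha>) (u, m) = (\<alpha> (- (int \<circ> m)) (src G u), 0)"
  "cmp (cross_product G \<alpha>) (u, m) (v, n) = (cmp G u (\<alpha> (int \<circ> m) v), m + n)"
  "deg (cross_product G \<alpha>) (u, m) = cs (deg G u) m"
  by (auto simp: cross_product_def cs_def fun_eq_iff)

lemma inf_pathsD: "x \<in> inf_paths G \<Longrightarrow> a \<le> b \<Longrightarrow> x (a, b) \<in> Mor G \<and> deg G (x (a, b)) = b - a"
  unfolding inf_paths_def by simp

lemma cyl_union: "\<Union> {cylinder G u | u. u \<in> Mor G} = inf_paths G"
proof (intro equalityI subsetI)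
  fix x assume "x \<in> \<Union> {cylinder G u | u. u \<in> Mor G}" then show "x \<in> inf_paths G"
    unfolding cylinder_def by auto
next
  fix x assume x: "x \<in> inf_paths G"
  have "x (0, 0) \<in> Mor G \<and> deg G (x (0, 0)) = 0 - 0" by (rule inf_pathsD[OF x]) simp
  then have m: "x (0, 0) \<in> Mor G" and "deg G (x (0, 0)) = 0" by auto
  then have "x \<in> cylinder G (x (0, 0))" using x by (simp add: cylinder_def)
  then show "x \<in> \<Union> {cylinder G u | u. u \<in> Mor G}" using m by auto
qed

lemma topspace_path[simp]: "topspace (path_topology G) = inf_paths G"
  unfolding path_topology_def topology_generated_by_topspace by (rule cyl_union)

lemma cyl_open: "u \<in> Mor G \<Longrightarrow> openin (path_topology G) (cylinder G u)"
  unfolding path_topology_def by (rule topology_generated_by_Basis) auto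

locale kga =
  fixes G :: "('a, 'k::finite) kg" and \<alpha> :: "('l \<Rightarrow> int) \<Rightarrow> 'a \<Rightarrow> 'a"
  assumes kg: "is_kgraph G" and act: "is_action G \<alpha>"
begin

lemma cat: "is_category G" using kg by (simp add: is_kgraph_def)

lemma rng_Mor[simp]: "u \<in> Mor G \<Longrightarrow> rng G u \<in> Mor G"
  and src_Mor[simp]: "u \<in> Mor G \<Longrightarrow> src G u \<in> Mor G"
  and rng_rng[simp]: "u \<in> Mor G \<Longrightarrow> rng G (rng G u) = rng G u"
  and src_rng[simp]: "u \<in> Mor G \<Longrightarrow> src G (rng G u) = rng G u"
  and rng_src[simp]: "u \<in> Mor G \<Longrightarrow> rng G (src G u) = src G u"
  and src_src[simp]: "u \<in> Mor G \<Longrightarrow> src G (src G u) = src G u"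
  and cmp_rng[simp]: "u \<in> Mor G \<Longrightarrow> cmp G (rng G u) u = u"
  and cmp_src[simp]: "u \<in> Mor G \<Longrightarrow> cmp G u (src G u) = u"
  using cat by (auto simp: is_category_def)

lemma cmp_Mor[simp]: "u \<in> Mor G \<Longrightarrow> v \<in> Mor G \<Longrightarrow> src G u = rng G v \<Longrightarrow> cmp G u v \<in> Mor G"
  and rng_cmp[simp]: "u \<in> Mor G \<Longrightarrow> v \<in> Mor G \<Longrightarrow> src G u = rng G v \<Longrightarrow> rng G (cmp G u v) = rng G u"
  and src_cmp[simp]: "u \<in> Mor G \<Longrightarrow> v \<in> Mor G \<Longrightarrow> src G u = rng G v \<Longrightarrow> src G (cmp G u v) = src G v"
  using cat by (auto simp: is_category_def)

lemma deg_cmp: "u \<in> Mor G \<Longrightarrow> v \<in> Mor G \<Longrightarrow> src G u = rng G v \<Longrightarrow> deg G (cmp G u v) = deg G u + deg G v"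
  using kg by (auto simp: is_kgraph_def)

lemma factor_unique:
  assumes "u \<in> Mor G" "v \<in> Mor G" "u' \<in> Mor G" "v' \<in> Mor G" "src G u = rng G v" "src G u' = rng G v'"
    "deg G u = deg G u'" "deg G v = deg G v'" "cmp G u v = cmp G u' v'"
  shows "u = u' \<and> v = v'"
proof -
  let ?w = "cmp G u v"
  have w: "?w \<in> Mor G" "deg G ?w = deg G u + deg G v" using assms cmp_Mor deg_cmp by auto
  then have "\<exists>!(p, q). p \<in> Mor G \<and> q \<in> Mor G \<and> src G p = rng G q
           \<and> deg G p = deg G u \<and> deg G q = deg G v \<and> cmp G p q = ?w"
    using kg unfolding is_kgraph_def by blast
  then show ?thesis using assms by (auto simp: Ex1_def)
qed

lemma vertex: assumes "v \<in> Mor G" "deg G v = 0" shows "rng G v = v" "src G v = v"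
proof -
  have d1: "deg G (rng G v) = 0"
    using deg_cmp[of "rng G v" v] assms by (auto simp: fun_eq_iff)
  have d2: "deg G (src G v) = 0"
    using deg_cmp[of v "src G v"] assms by (auto simp: fun_eq_iff)
  have "rng G v = v \<and> v = src G v"
    by (rule factor_unique) (use assms d1 d2 in auto)
  then show "rng G v = v" "src G v = v" by auto
qed

lemma aut: "is_automorphism G (\<alpha> m)" using act by (simp add: is_action_def)

lemma alpha_Mor[simp]: "u \<in> Mor G \<Longrightarrow> \<alpha> m u \<in> Mor G"
  using aut[of m] by (auto simp: is_automorphism_def bij_betw_def)
lemma alpha_deg[simp]: "u \<in> Mor G \<Longrightarrow> deg G (\<alpha> m u) = deg G u"
  and alpha_rng[simp]: "u \<in> Mor G \<Longrightarrow> rng G (\<alpha> m u) = \<alpha> m (rng G u)"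
  and alpha_src[simp]: "u \<in> Mor G \<Longrightarrow> src G (\<alpha> m u) = \<alpha> m (src G u)"
  using aut[of m] by (auto simp: is_automorphism_def)
lemma alpha_cmp: "u \<in> Mor G \<Longrightarrow> v \<in> Mor G \<Longrightarrow> src G u = rng G v \<Longrightarrow> \<alpha> m (cmp G u v) = cmp G (\<alpha> m u) (\<alpha> m v)"
  using aut[of m] by (auto simp: is_automorphism_def)
lemma alpha0[simp]: "u \<in> Mor G \<Longrightarrow> \<alpha> 0 u = u"
  using act by (auto simp: is_action_def)
lemma alpha_add: "u \<in> Mor G \<Longrightarrow> \<alpha> m (\<alpha> n u) = \<alpha> (m + n) u"
  using act by (auto simp: is_action_def)
lemma alpha_neg0[simp]: "\<alpha> (- (int \<circ> 0)) u = u" if "u \<in> Mor G"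
proof -
  have "- (int \<circ> 0) = (0::'l\<Rightarrow>int)" by (simp add: fun_eq_iff)
  then show ?thesis using that by simp
qed
lemma alpha_inv1[simp]: "u \<in> Mor G \<Longrightarrow> \<alpha> m (\<alpha> (- m) u) = u"
  by (simp add: alpha_add)
lemma alpha_inv2[simp]: "u \<in> Mor G \<Longrightarrow> \<alpha> (- m) (\<alpha> m u) = u"
  by (simp add: alpha_add)


lemma xpath:
  assumes "x \<in> inf_paths G"
  shows "a \<le> b \<Longrightarrow> x (a, b) \<in> Mor G" "a \<le> b \<Longrightarrow> deg G (x (a, b)) = b - a"
    "a \<le> b \<Longrightarrow> rng G (x (a, b)) = x (a, a)" "a \<le> b \<Longrightarrow> src G (x (a, b)) = x (b, b)"
    "a \<le> b \<Longrightarrow> b \<le> c \<Longrightarrow> x (a, c) = cmp G (x (a, b)) (x (b, c))"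
    "\<not> a \<le> b \<Longrightarrow> x (a, b) = undefined"
  using assms by (auto simp: inf_paths_def)

lemma minus_cs: "b - a = cs ((b \<circ> Inl) - (a \<circ> Inl)) ((b \<circ> Inr) - (a \<circ> Inr))"
  by (auto simp: cs_def fun_eq_iff split: sum.splits)

lemma int_diff: "(m::'l \<Rightarrow> nat) \<le> n \<Longrightarrow> int \<circ> (n - m) = (int \<circ> n) - (int \<circ> m)"
  by (auto simp: fun_eq_iff le_fun_def of_nat_diff)

lemma nat_diff_add: "(m::'l \<Rightarrow> nat) \<le> n \<Longrightarrow> n \<le> c \<Longrightarrow> (n - m) + (c - n) = c - m"
  by (auto simp: fun_eq_iff le_fun_def)

lemma alpha_shift: "(m::'l\<Rightarrow>nat) \<le> n \<Longrightarrow> v \<in> Mor G \<Longrightarrow> \<alpha> (- (int \<circ> (n - m))) (\<alpha> (- (int \<circ> m)) v) = \<alpha> (- (int \<circ> n)) v"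
proof -
  assume mn: "m \<le> n" and v: "v \<in> Mor G"
  have "- (int \<circ> (n - m)) + - (int \<circ> m) = - (int \<circ> n)" using int_diff[OF mn] by (simp add: algebra_simps)
  then show ?thesis using v by (simp add: alpha_add)
qed

lemma alpha_shift2: "(m::'l\<Rightarrow>nat) \<le> n \<Longrightarrow> v \<in> Mor G \<Longrightarrow> \<alpha> (int \<circ> (n - m)) (\<alpha> (- (int \<circ> n)) v) = \<alpha> (- (int \<circ> m)) v"
proof -
  assume mn: "m \<le> n" and v: "v \<in> Mor G"
  have "(int \<circ> (n - m)) + - (int \<circ> n) = - (int \<circ> m)" using int_diff[OF mn] by (simp add: algebra_simps)
  then show ?thesis using v by (simp add: alpha_add)
qed

lemma ypath:
  assumes y: "y \<in> inf_paths (cross_product G \<alpha>)" and ab: "a \<le> b"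
  shows "fst (y (a, b)) \<in> Mor G" "snd (y (a, b)) = (b \<circ> Inr) - (a \<circ> Inr)"
    "deg G (fst (y (a, b))) = (b \<circ> Inl) - (a \<circ> Inl)"
    "y (a, a) = (rng G (fst (y (a, b))), 0)"
    "y (b, b) = (\<alpha> (- (int \<circ> snd (y (a, b)))) (src G (fst (y (a, b)))), 0)"
proof -
  obtain u m where um: "y (a, b) = (u, m)" by fastforce
  have P: "(u, m) \<in> Mor G \<times> UNIV" "cs (deg G u) m = b - a" "(rng G u, 0) = y (a, a)"
    "(\<alpha> (- (int \<circ> m)) (src G u), 0) = y (b, b)"
  proof -
    have "y (a, b) \<in> Mor (cross_product G \<alpha>) \<and> deg (cross_product G \<alpha>) (y (a, b)) = b - a
       \<and> rng (cross_product G \<alpha>) (y (a, b)) = y (a, a) \<and> src (cross_product G \<alpha>) (y (a, b)) = y (b, b)"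
      using y ab unfolding inf_paths_def by blast
    then show "(u, m) \<in> Mor G \<times> UNIV" "cs (deg G u) m = b - a" "(rng G u, 0) = y (a, a)"
      "(\<alpha> (- (int \<circ> m)) (src G u), 0) = y (b, b)" unfolding um by simp_all
  qed
  have "b - a = cs ((b \<circ> Inl) - (a \<circ> Inl)) ((b \<circ> Inr) - (a \<circ> Inr))"
    by (rule minus_cs)
  with P(2) have "deg G u = (b \<circ> Inl) - (a \<circ> Inl)" "m = (b \<circ> Inr) - (a \<circ> Inr)" by auto
  then show "fst (y (a, b)) \<in> Mor G" "snd (y (a, b)) = (b \<circ> Inr) - (a \<circ> Inr)"
    "deg G (fst (y (a, b))) = (b \<circ> Inl) - (a \<circ> Inl)"
    "y (a, a) = (rng G (fst (y (a, b))), 0)"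
    "y (b, b) = (\<alpha> (- (int \<circ> snd (y (a, b)))) (src G (fst (y (a, b)))), 0)"
    using P um by auto
qed

lemma ycomp:
  assumes y: "y \<in> inf_paths (cross_product G \<alpha>)" and "a \<le> b" "b \<le> c"
  shows "y (a, c) = (cmp G (fst (y (a, b))) (\<alpha> (int \<circ> snd (y (a, b))) (fst (y (b, c)))),
                     snd (y (a, b)) + snd (y (b, c)))"
proof -
  have "y (a, c) = cmp (cross_product G \<alpha>) (y (a, b)) (y (b, c))"
    using assms unfolding inf_paths_def by blast
  then show ?thesis by (metis cross_simps(4) prod.collapse)
qed

lemma yundef: "y \<in> inf_paths (cross_product G \<alpha>) \<Longrightarrow> \<not> a \<le> b \<Longrightarrow> y (a, b) = undefined"
  unfolding inf_paths_def by blast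

definition Fm :: "(('k \<Rightarrow> nat) \<times> ('k \<Rightarrow> nat) \<Rightarrow> 'a) \<Rightarrow> (('k + 'l \<Rightarrow> nat) \<times> ('k + 'l \<Rightarrow> nat) \<Rightarrow> 'a \<times> ('l \<Rightarrow> nat))" where
  "Fm x = (\<lambda>(a, b). if a \<le> b then (\<alpha> (- (int \<circ> (a \<circ> Inr))) (x (a \<circ> Inl, b \<circ> Inl)), (b \<circ> Inr) - (a \<circ> Inr))
                     else undefined)"


lemma Fm_path: assumes x: "x \<in> inf_paths G" shows "Fm x \<in> inf_paths (cross_product G \<alpha>)"
  unfolding inf_paths_def mem_Collect_eq
proof (intro conjI allI impI)
  fix a b :: "'k + 'l \<Rightarrow> nat" assume ab: "a \<le> b"
  note l = le_Inl[OF ab] and r = le_Inr[OF ab]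
  show "Fm x (a, b) \<in> Mor (cross_product G \<alpha>)" using ab l by (simp add: Fm_def xpath(1-4)[OF x])
  have "b - a = cs ((b \<circ> Inl) - (a \<circ> Inl)) ((b \<circ> Inr) - (a \<circ> Inr))"
    by (rule minus_cs)
  then show "deg (cross_product G \<alpha>) (Fm x (a, b)) = b - a" using ab l by (simp add: Fm_def xpath(1-4)[OF x])
  show "rng (cross_product G \<alpha>) (Fm x (a, b)) = Fm x (a, a)" using ab l by (simp add: Fm_def xpath(1-4)[OF x])
  show "src (cross_product G \<alpha>) (Fm x (a, b)) = Fm x (b, b)"
    using ab l by (simp add: Fm_def xpath(1-4)[OF x] alpha_shift[OF r])
next
  fix a b c :: "'k + 'l \<Rightarrow> nat" assume abc: "a \<le> b \<and> b \<le> c"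
  then have ab: "a \<le> b" and bc: "b \<le> c" and ac: "a \<le> c" by auto
  note l1 = le_Inl[OF ab] and l2 = le_Inl[OF bc] and r1 = le_Inr[OF ab] and r2 = le_Inr[OF bc]
  have "\<alpha> (int \<circ> ((b \<circ> Inr) - (a \<circ> Inr))) (\<alpha> (- (int \<circ> (b \<circ> Inr))) (x (b \<circ> Inl, c \<circ> Inl)))
      = \<alpha> (- (int \<circ> (a \<circ> Inr))) (x (b \<circ> Inl, c \<circ> Inl))"
    using l2 by (simp add: xpath(1-4)[OF x] alpha_shift2[OF r1])
  moreover have "x (a \<circ> Inl, c \<circ> Inl) = cmp G (x (a \<circ> Inl, b \<circ> Inl)) (x (b \<circ> Inl, c \<circ> Inl))"
    using xpath(5)[OF x l1 l2] .
  ultimately show "Fm x (a, c) = cmp (cross_product G \<alpha>) (Fm x (a, b)) (Fm x (b, c))"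
    using ab bc ac l1 l2 by (simp add: xpath(1-4)[OF x] Fm_def alpha_cmp nat_diff_add[OF r1 r2])
next
  fix a b :: "'k + 'l \<Rightarrow> nat" assume "\<not> a \<le> b"
  then show "Fm x (a, b) = undefined" by (simp add: Fm_def)
qed


lemma alpha_int0[simp]: "\<alpha> (int \<circ> 0) u = u" if "u \<in> Mor G"
proof -
  have "(int \<circ> 0) = (0::'l\<Rightarrow>int)" by (simp add: fun_eq_iff)
  then show ?thesis using that by simp
qed

definition Gm :: "(('k + 'l \<Rightarrow> nat) \<times> ('k + 'l \<Rightarrow> nat) \<Rightarrow> 'a \<times> ('l \<Rightarrow> nat)) \<Rightarrow> (('k \<Rightarrow> nat) \<times> ('k \<Rightarrow> nat) \<Rightarrow> 'a)" where
  "Gm y = (\<lambda>(p, q). if p \<le> q then fst (y (embed_deg p, embed_deg q)) else undefined)"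

lemma Gm_path: assumes y: "y \<in> inf_paths (cross_product G \<alpha>)" shows "Gm y \<in> inf_paths G"
  unfolding inf_paths_def mem_Collect_eq
proof (intro conjI allI impI)
  fix p q :: "'k \<Rightarrow> nat" assume pq: "p \<le> q"
  have le: "cs p (0::'l\<Rightarrow>nat) \<le> cs q 0" using pq by simp
  note Y = ypath[OF y le]
  show "Gm y (p, q) \<in> Mor G" using pq Y by (simp add: Gm_def embed_cs)
  show "deg G (Gm y (p, q)) = q - p" using pq Y by (simp add: Gm_def embed_cs)
  show "rng G (Gm y (p, q)) = Gm y (p, p)" using pq Y by (simp add: Gm_def embed_cs)
  show "src G (Gm y (p, q)) = Gm y (q, q)" using pq Y by (simp add: Gm_def embed_cs)
next
  fix p q r :: "'k \<Rightarrow> nat" assume "p \<le> q \<and> q \<le> r"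
  then have pq: "p \<le> q" and qr: "q \<le> r" by auto
  have le1: "cs p (0::'l\<Rightarrow>nat) \<le> cs q 0" and le2: "cs q (0::'l\<Rightarrow>nat) \<le> cs r 0" using pq qr by auto
  have "y (cs p 0, cs r 0) = (cmp G (fst (y (cs p 0, cs q 0))) (\<alpha> (int \<circ> snd (y (cs p 0, cs q 0))) (fst (y (cs q 0, cs r 0)))),
                     snd (y (cs p 0, cs q 0)) + snd (y (cs q 0, cs r 0)))"
    by (rule ycomp[OF y le1 le2])
  then show "Gm y (p, r) = cmp G (Gm y (p, q)) (Gm y (q, r))"
    using pq qr order_trans[OF pq qr] ypath[OF y le1] ypath[OF y le2] by (simp add: Gm_def embed_cs)
next
  fix p q :: "'k \<Rightarrow> nat" assume "\<not> p \<le> q"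
  then show "Gm y (p, q) = undefined" by (simp add: Gm_def)
qed

lemma GF: assumes x: "x \<in> inf_paths G" shows "Gm (Fm x) = x"
proof (rule ext, clarify)
  fix p q :: "'k \<Rightarrow> nat"
  show "Gm (Fm x) (p, q) = x (p, q)"
  proof (cases "p \<le> q")
    case True then show ?thesis by (simp add: Gm_def Fm_def embed_cs xpath(1)[OF x])
  next
    case False then show ?thesis by (simp add: Gm_def xpath(6)[OF x])
  qed
qed

lemma key:
  assumes y: "y \<in> inf_paths (cross_product G \<alpha>)" and pq: "p \<le> q" and mn: "m \<le> n"
  shows "fst (y (cs p m, cs q n)) = \<alpha> (- (int \<circ> m)) (fst (y (cs p 0, cs q 0)))"
proof -
  let ?A0 = "cs p 0" and ?Am = "cs p m" and ?B0 = "cs q 0" and ?Bm = "cs q m" and ?Bn = "cs q n"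
  have l1: "?A0 \<le> ?Am" "?Am \<le> ?Bm" "?A0 \<le> ?B0" "?B0 \<le> ?Bm" "?Bm \<le> ?Bn" "?B0 \<le> ?B0"
    using pq mn by auto
  define v1 where "v1 = fst (y (?A0, ?Am))"
  define u where "u = fst (y (?Am, ?Bm))"
  define x where "x = fst (y (?A0, ?B0))"
  define v2 where "v2 = fst (y (?B0, ?Bm))"
  define v3 where "v3 = fst (y (?Bm, ?Bn))"
  note P1 = ypath[OF y l1(1), folded v1_def] and P2 = ypath[OF y l1(2), folded u_def]
    and P3 = ypath[OF y l1(3), folded x_def] and P4 = ypath[OF y l1(4), folded v2_def]
    and P5 = ypath[OF y l1(5), folded v3_def]
  have C1: "fst (y (?A0, ?Bm)) = cmp G v1 (\<alpha> (int \<circ> m) u)"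
    using ycomp[OF y l1(1) l1(2)] P1 unfolding v1_def u_def by simp
  have C2: "fst (y (?A0, ?Bm)) = cmp G x v2"
    using ycomp[OF y l1(3) l1(4)] P3 P4 unfolding x_def v2_def by simp
  have C3: "fst (y (?Am, ?Bn)) = cmp G u v3"
    using ycomp[OF y l1(2) l1(5)] P2 P5 unfolding u_def v3_def by simp
  have v1v: "rng G v1 = v1" "src G v1 = v1" using vertex[of v1] P1 by auto
  have v2v: "rng G v2 = v2" using vertex[of v2] P4 by auto
  have v3v: "rng G v3 = v3" using vertex[of v3] P5 by auto
  have s1: "snd (y (?A0, ?Am)) = m" using P1(2) by simp
  have s3: "snd (y (?A0, ?B0)) = 0" using P3(2) by simp
  have "v2 = src G x" using P3(5) P4(4) v2v P3(1) s3 by simp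
  then have "cmp G x v2 = x" using P3(1) by simp
  moreover have "rng G u = \<alpha> (- (int \<circ> m)) v1" using P1(5) P2(4) v1v s1 by simp
  then have "rng G (\<alpha> (int \<circ> m) u) = v1" using P2(1) P1(1) by simp
  then have "cmp G v1 (\<alpha> (int \<circ> m) u) = \<alpha> (int \<circ> m) u" using P2(1)
    by (metis alpha_Mor cmp_rng)
  ultimately have "\<alpha> (int \<circ> m) u = x" using C1 C2 by simp
  then have ux: "u = \<alpha> (- (int \<circ> m)) x" using P2(1) by (metis alpha_inv2)
  have s2: "snd (y (?Am, ?Bm)) = 0" using P2(2) by simp
  have "v3 = src G u" using P2(5) P5(4) v3v P2(1) s2 by simp
  then have "cmp G u v3 = u" using P2(1) by simp
  then show ?thesis using C3 ux x_def by simp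
qed

lemma FG: assumes y: "y \<in> inf_paths (cross_product G \<alpha>)" shows "Fm (Gm y) = y"
proof (rule ext, clarify)
  fix a b :: "'k + 'l \<Rightarrow> nat"
  show "Fm (Gm y) (a, b) = y (a, b)"
  proof (cases "a \<le> b")
    case True
    obtain p m where a: "a = cs p m" using cs_split by blast
    obtain q n where b: "b = cs q n" using cs_split by blast
    have pq: "p \<le> q" and mn: "m \<le> n" using True a b by auto
    have "y (a, b) = (fst (y (a, b)), snd (y (a, b)))" by simp
    also have "\<dots> = (\<alpha> (- (int \<circ> m)) (fst (y (cs p 0, cs q 0))), n - m)"
      using key[OF y pq mn] ypath(2)[OF y True] a b by simp
    finally show ?thesis using True a b pq by (simp add: Fm_def Gm_def embed_cs)
  next
    case False then show ?thesis by (simp add: Fm_def yundef[OF y])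
  qed
qed

lemma path_unique:
  assumes x: "x \<in> inf_paths G" and x': "x' \<in> inf_paths G" and eq: "\<And>p. x (0, p) = x' (0, p)"
  shows "x = x'"
proof (rule ext, clarify)
  fix p q :: "'k \<Rightarrow> nat"
  show "x (p, q) = x' (p, q)"
  proof (cases "p \<le> q")
    case True
    have 0: "0 \<le> p" by simp
    have pp: "x (p, p) = x' (p, p)" using xpath(4)[OF x 0] xpath(4)[OF x' 0] eq by metis
    have "x (0, p) = x' (0, p) \<and> x (p, q) = x' (p, q)"
    proof (rule factor_unique)
      show "cmp G (x (0, p)) (x (p, q)) = cmp G (x' (0, p)) (x' (p, q))"
        using xpath(5)[OF x 0 True] xpath(5)[OF x' 0 True] eq by metis
    qed (use True eq pp in \<open>simp_all add: xpath(1-4)[OF x] xpath(1-4)[OF x']\<close>)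
    then show ?thesis by simp
  next
    case False then show ?thesis using xpath(6)[OF x] xpath(6)[OF x'] by simp
  qed
qed


lemma Fm_0: assumes x: "x \<in> inf_paths G" shows "Fm x (0, cs d m) = (x (0, d), m)"
proof -
  show ?thesis by (simp add: Fm_def xpath(1)[OF x])
qed

lemma Fm_cont: "continuous_map (path_topology G) (path_topology (cross_product G \<alpha>)) Fm"
  unfolding path_topology_def[of "cross_product G \<alpha>"]
proof (rule continuous_on_generated_topo)
  fix U assume "U \<in> {cylinder (cross_product G \<alpha>) w |w. w \<in> Mor (cross_product G \<alpha>)}"
  then obtain u m where U: "U = cylinder (cross_product G \<alpha>) (u, m)" and u: "u \<in> Mor G" by auto
  have "Fm -` U \<inter> topspace (path_topology G) = cylinder G u"
  proof (intro set_eqI iffI)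
    fix x assume "x \<in> Fm -` U \<inter> topspace (path_topology G)"
    then have x: "x \<in> inf_paths G" and "Fm x (0, cs (deg G u) m) = (u, m)" by (auto simp: U cylinder_def)
    then have "x (0, deg G u) = u" by (simp add: Fm_0)
    then show "x \<in> cylinder G u" using x by (simp add: cylinder_def)
  next
    fix x assume "x \<in> cylinder G u"
    then have x: "x \<in> inf_paths G" and e: "x (0, deg G u) = u" by (auto simp: cylinder_def)
    then show "x \<in> Fm -` U \<inter> topspace (path_topology G)"
      using Fm_path[OF x] by (simp add: U cylinder_def Fm_0)
  qed
  then show "openin (path_topology G) (Fm -` U \<inter> topspace (path_topology G))"
    using cyl_open[OF u] by simp
next
  show "Fm ` topspace (path_topology G) \<subseteq> \<Union> {cylinder (cross_product G \<alpha>) w |w. w \<in> Mor (cross_product G \<alpha>)}"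
  proof -
    have "Fm ` topspace (path_topology G) \<subseteq> inf_paths (cross_product G \<alpha>)" using Fm_path by auto
    then show ?thesis by (simp only: cyl_union)
  qed
qed

lemma Gm_cont: "continuous_map (path_topology (cross_product G \<alpha>)) (path_topology G) Gm"
  unfolding path_topology_def[of G]
proof (rule continuous_on_generated_topo)
  fix U assume "U \<in> {cylinder G w |w. w \<in> Mor G}"
  then obtain u where U: "U = cylinder G u" and u: "u \<in> Mor G" by auto
  have "Gm -` U \<inter> topspace (path_topology (cross_product G \<alpha>)) = cylinder (cross_product G \<alpha>) (u, 0)"
  proof (intro set_eqI iffI)
    fix y assume "y \<in> Gm -` U \<inter> topspace (path_topology (cross_product G \<alpha>))"
    then have y: "y \<in> inf_paths (cross_product G \<alpha>)" and g: "Gm y (0, deg G u) = u"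
      by (auto simp: U cylinder_def)
    have le: "cs 0 0 \<le> cs (deg G u) (0::'l\<Rightarrow>nat)" by simp
    have "fst (y (cs 0 0, cs (deg G u) 0)) = u" using g by (simp add: Gm_def embed_cs)
    moreover have "snd (y (cs 0 0, cs (deg G u) 0)) = 0" using ypath(2)[OF y le] by simp
    ultimately have "y (0, cs (deg G u) 0) = (u, 0)" by (metis cs_zero prod.collapse)
    then show "y \<in> cylinder (cross_product G \<alpha>) (u, 0)" using y by (simp add: cylinder_def)
  next
    fix y assume "y \<in> cylinder (cross_product G \<alpha>) (u, 0)"
    then have y: "y \<in> inf_paths (cross_product G \<alpha>)" and e: "y (0, cs (deg G u) 0) = (u, 0)"
      by (auto simp: cylinder_def)
    have "Gm y (0, deg G u) = u" using e by (simp add: Gm_def embed_cs)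
    then show "y \<in> Gm -` U \<inter> topspace (path_topology (cross_product G \<alpha>))"
      using y Gm_path[OF y] by (simp add: U cylinder_def)
  qed
  then show "openin (path_topology (cross_product G \<alpha>)) (Gm -` U \<inter> topspace (path_topology (cross_product G \<alpha>)))"
    using cyl_open[of "(u, 0)" "cross_product G \<alpha>"] u by simp
next
  show "Gm ` topspace (path_topology (cross_product G \<alpha>)) \<subseteq> \<Union> {cylinder G w |w. w \<in> Mor G}"
  proof -
    have "Gm ` topspace (path_topology (cross_product G \<alpha>)) \<subseteq> inf_paths G" using Gm_path by auto
    then show ?thesis by (simp only: cyl_union)
  qed
qed

lemma Fm_homeo: "homeomorphic_map (path_topology G) (path_topology (cross_product G \<alpha>)) Fm"
  unfolding homeomorphic_map_maps homeomorphic_maps_def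
proof (intro exI conjI ballI)
  show "continuous_map (path_topology G) (path_topology (cross_product G \<alpha>)) Fm" by (rule Fm_cont)
  show "continuous_map (path_topology (cross_product G \<alpha>)) (path_topology G) Gm" by (rule Gm_cont)
  fix x assume "x \<in> topspace (path_topology G)" then show "Gm (Fm x) = x" using GF by simp
next
  fix y assume "y \<in> topspace (path_topology (cross_product G \<alpha>))" then show "Fm (Gm y) = y" using FG by simp
qed

lemma Fm_embed: "x \<in> inf_paths G \<Longrightarrow> Fm x (0, embed_deg p) = (x (0, p), 0)"
  by (simp add: embed_cs Fm_0)

lemma Fm_unique:
  assumes g: "homeomorphic_map (path_topology G) (path_topology (cross_product G \<alpha>)) g"
    and ge: "\<forall>x\<in>inf_paths G. \<forall>p. g x (0, embed_deg p) = (x (0, p), 0)"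
    and x: "x \<in> inf_paths G"
  shows "g x = Fm x"
proof -
  have y: "g x \<in> inf_paths (cross_product G \<alpha>)"
    using homeomorphic_imp_surjective_map[OF g] x by auto
  have "Gm (g x) = x"
  proof (rule path_unique[OF Gm_path[OF y] x])
    fix p
    have "embed_deg (0::'k\<Rightarrow>nat) = (0::'k+'l\<Rightarrow>nat)" by (simp add: embed_cs)
    then show "Gm (g x) (0, p) = x (0, p)" using ge x by (simp add: Gm_def)
  qed
  then show ?thesis using FG[OF y] by metis
qed

end
theorem proposition4p4:
  fixes G :: "('a, 'k::finite) kg"
    and \<alpha> :: "('l::finite \<Rightarrow> int) \<Rightarrow> 'a \<Rightarrow> 'a"
  assumes "is_kgraph G" and "row_finite G" and "no_sources G"
    and "is_action G \<alpha>"
  shows "\<exists>f. homeomorphic_map (path_topology G) (path_topology (cross_product G \<alpha>)) f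
            \<and> (\<forall>x\<in>inf_paths G. \<forall>p. f x (0, embed_deg p) = (x (0, p), 0))
         \<and> (\<forall>g. homeomorphic_map (path_topology G) (path_topology (cross_product G \<alpha>)) g
              \<and> (\<forall>x\<in>inf_paths G. \<forall>p. g x (0, embed_deg p) = (x (0, p), 0))
              \<longrightarrow> (\<forall>x\<in>inf_paths G. g x = f x))"
proof -
  interpret kga G \<alpha> using assms(1,4) by unfold_locales
  show ?thesis
    using Fm_homeo Fm_embed Fm_unique by blast
qed

end
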